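(* Let $\beta:\mathbb R\to\mathbb R$ be piecewise continuous with $\beta(-t)^2=\beta(t)^2$ for all $t$, let $\Lambda(t)=\begin{pmatrix}0&1\\-\beta(t)^2&0\end{pmatrix}$, let $b(t,s)$ solve $\frac{\partial}{\partial t}b(t,s)=\Lambda(t)b(t,s)$, $b(s,s)=\mathbb 1$, and set $b(t)=b(t,-t)$ with entries $b_{ij}(t)$. If $|\mathrm{Tr}\,b(t)|>2$ for some $t\ge0$, then $b_{12}(t)\neq0$ and $b_{21}(t)\neq0$. *)

theory Defs
  imports "HOL-Analysis.Analysis"
begin

definition piecewise_continuous :: "(real \<Rightarrow> real) \<Rightarrow> bool" where
  "piecewise_continuous f \<longleftrightarrow>
     (\<forall>a b. finite {x \<in> {a..b}. \<not> isCont f x}) \<and>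
     (\<forall>x. (\<exists>l. (f \<longlongrightarrow> l) (at_left x)) \<and> (\<exists>l. (f \<longlongrightarrow> l) (at_right x)))"

definition Lam :: "(real \<Rightarrow> real) \<Rightarrow> real \<Rightarrow> real^2^2" where
  "Lam \<beta> t = vector [vector [0, 1], vector [- ((\<beta> t)^2), 0]]"

end

theory Submission
  imports Defs
begin

lemma comp_deriv:
  assumes "(F has_vector_derivative (M::real^2^2)) (at u)"
  shows "((\<lambda>\<tau>. F \<tau> $ i $ j) has_real_derivative M $ i $ j) (at u)"
proof -
  have bl: "bounded_linear (\<lambda>A::real^2^2. A $ i $ j)"
    by (rule bounded_linear_compose[where f="\<lambda>y::real^2. y $ j" and g="\<lambda>x::real^2^2. x $ i"])
       (rule bounded_linear_vec_nth)+
  have "((\<lambda>\<tau>. F \<tau> $ i $ j) has_vector_derivative M $ i $ j) (at u)"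
    using bounded_linear.has_vector_derivative[OF bl assms] by simp
  then show ?thesis by (simp add: has_real_derivative_iff_has_vector_derivative)
qed

lemma zero_deriv_const:
  fixes f :: "real \<Rightarrow> real"
  assumes "t \<ge> 0" "finite K" "continuous_on {-t..t} f"
    and d: "\<And>x. x \<in> {-t..t} - K \<Longrightarrow> (f has_real_derivative 0) (at x)"
  shows "f t = f (-t)"
proof (rule has_derivative_zero_unique_strong_convex[of "{-t..t}" K f "-t"])
  fix x assume x: "x \<in> {-t..t} - K"
  have "(f has_real_derivative 0) (at x within {-t..t})"
    using d[OF x] by (rule has_field_derivative_at_within)
  moreover have e: "((*) (0::real)) = (\<lambda>h. 0)" by (rule ext) simp
  ultimately show "(f has_derivative (\<lambda>h. 0)) (at x within {-t..t})"
    unfolding has_field_derivative_def by simp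
next
  show "convex {-t..t}" by (rule convex_real_interval)
  show "finite K" by fact
  show "continuous_on {-t..t} f" by fact
  show "-t \<in> {-t..t}" using assms(1) by simp
  show "t \<in> {-t..t}" using assms(1) by simp
qed simp

theorem mainTheorem5:
  fixes \<beta> :: "real \<Rightarrow> real" and b :: "real \<Rightarrow> real \<Rightarrow> real^2^2" and t :: real
  assumes pc: "piecewise_continuous \<beta>"
    and sym: "\<forall>u. (\<beta> (- u))^2 = (\<beta> u)^2"
    and init: "\<forall>s. b s s = mat 1"
    and cont: "\<forall>s. continuous_on UNIV (\<lambda>\<tau>. b \<tau> s)"
    and ode: "\<forall>s u. isCont \<beta> u \<longrightarrow>
                 ((\<lambda>\<tau>. b \<tau> s) has_vector_derivative (Lam \<beta> u ** b u s)) (at u)"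
    and t: "t \<ge> 0"
    and tr: "\<bar>trace (b t (- t))\<bar> > 2"
  shows "b t (- t) $ 1 $ 2 \<noteq> 0 \<and> b t (- t) $ 2 $ 1 \<noteq> 0"
proof -
  define B where "B i j \<tau> = b \<tau> (-t) $ i $ j" for i j \<tau>
  define q where "q u = (\<beta> u)^2" for u
  define K0 where "K0 = {x \<in> {-t..t}. \<not> isCont \<beta> x}"
  define K where "K = K0 \<union> uminus ` K0"
  have fK: "finite K" using pc unfolding piecewise_continuous_def K_def K0_def by auto
  have cB: "continuous_on UNIV (B i j)" for i j
  proof -
    have "continuous_on UNIV (\<lambda>\<tau>. b \<tau> (-t))" using cont by auto
    then have "continuous_on UNIV (\<lambda>\<tau>. b \<tau> (-t) $ i)" by (rule continuous_on_component)
    then show ?thesis unfolding B_def by (rule continuous_on_component)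
  qed
  have cB': "continuous_on S (B i j)" for i j S using cB continuous_on_subset by blast
  have cBm: "continuous_on S (\<lambda>\<tau>. B i j (-\<tau>))" for i j S
    using continuous_on_compose2[OF cB continuous_on_minus[OF continuous_on_id]] by auto
  have dB: "\<And>i j. isCont \<beta> u \<Longrightarrow> (B i j has_real_derivative (Lam \<beta> u ** b u (-t)) $ i $ j) (at u)" for u
    unfolding B_def using ode comp_deriv by blast
  have LB: "(Lam \<beta> u ** M) $ 1 $ j = M $ 2 $ j" "(Lam \<beta> u ** M) $ 2 $ j = - q u * M $ 1 $ j" for u j and M :: "real^2^2"
    by (simp_all add: Lam_def matrix_matrix_mult_def sum_2 q_def)
  have d11: "isCont \<beta> u \<Longrightarrow> (B 1 j has_real_derivative B 2 j u) (at u)" for u j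
    using dB[of u 1 j] unfolding LB B_def by simp
  have d21: "isCont \<beta> u \<Longrightarrow> (B 2 j has_real_derivative - q u * B 1 j u) (at u)" for u j
    using dB[of u 2 j] unfolding LB B_def by simp
  have I: "B i j (-t) = (if i = j then 1 else 0)" for i j
    unfolding B_def using init by (simp add: mat_def)
  have q_sym: "q (-u) = q u" for u using sym q_def by simp
  define f1 where "f1 \<tau> = B 1 1 \<tau> * B 2 2 \<tau> - B 2 1 \<tau> * B 1 2 \<tau>" for \<tau>
  have "f1 t = f1 (-t)"
  proof (rule zero_deriv_const[OF t fK])
    show "continuous_on {-t..t} f1" unfolding f1_def
      by (intro continuous_intros cB')
  next
    fix x assume x: "x \<in> {-t..t} - K"
    then have c: "isCont \<beta> x" unfolding K_def K0_def by auto
    have dv: "(f1 has_real_derivative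
       (B 1 1 x * (- q x * B 1 2 x) + B 2 1 x * B 2 2 x) - (B 2 1 x * B 2 2 x + (- q x * B 1 1 x) * B 1 2 x)) (at x)"
      unfolding f1_def by (intro DERIV_diff DERIV_mult' d11[OF c] d21[OF c])
    have e: "(B 1 1 x * (- q x * B 1 2 x) + B 2 1 x * B 2 2 x) - (B 2 1 x * B 2 2 x + (- q x * B 1 1 x) * B 1 2 x) = 0"
      by (simp add: algebra_simps)
    show "(f1 has_real_derivative 0) (at x)" using dv unfolding e .
  qed
  then have det: "B 1 1 t * B 2 2 t - B 2 1 t * B 1 2 t = 1" unfolding f1_def using I by simp
  define f2 where "f2 \<tau> = - B 1 1 \<tau> * B 2 2 (-\<tau>) - B 2 1 \<tau> * B 1 2 (-\<tau>)" for \<tau>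
  have "f2 t = f2 (-t)"
  proof (rule zero_deriv_const[OF t fK])
    show "continuous_on {-t..t} f2" unfolding f2_def
      by (intro continuous_intros cB' cBm)
  next
    fix x assume x: "x \<in> {-t..t} - K"
    then have c: "isCont \<beta> x" unfolding K_def K0_def by auto
    have c2: "isCont \<beta> (-x)"
    proof (rule ccontr)
      assume "\<not> isCont \<beta> (-x)"
      with x have "-x \<in> K0" unfolding K0_def by auto
      then have "x \<in> uminus ` K0" by force
      with x show False unfolding K_def by auto
    qed
    have m22: "((\<lambda>\<tau>. B 2 2 (-\<tau>)) has_real_derivative (- q (-x) * B 1 2 (-x)) * (-1)) (at x)"
      using DERIV_chain2[OF d21[OF c2] DERIV_minus[OF DERIV_ident]] by simp
    have m12: "((\<lambda>\<tau>. B 1 2 (-\<tau>)) has_real_derivative (B 2 2 (-x)) * (-1)) (at x)"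
      using DERIV_chain2[OF d11[OF c2] DERIV_minus[OF DERIV_ident]] by simp
    have dv: "(f2 has_real_derivative
       (- B 1 1 x * ((- q (-x) * B 1 2 (-x)) * (-1)) + - B 2 1 x * B 2 2 (-x))
       - (B 2 1 x * (B 2 2 (-x) * (-1)) + (- q x * B 1 1 x) * B 1 2 (-x))) (at x)"
      unfolding f2_def by (intro DERIV_diff DERIV_mult' DERIV_minus d11[OF c] d21[OF c] m22 m12)
    have e: "(- B 1 1 x * ((- q (-x) * B 1 2 (-x)) * (-1)) + - B 2 1 x * B 2 2 (-x))
       - (B 2 1 x * (B 2 2 (-x) * (-1)) + (- q x * B 1 1 x) * B 1 2 (-x)) = 0"
      by (simp add: algebra_simps q_sym)
    show "(f2 has_real_derivative 0) (at x)" using dv unfolding e .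
  qed
  then have eq: "B 1 1 t = B 2 2 t" unfolding f2_def using I by simp
  have trB: "trace (b t (-t)) = B 1 1 t + B 2 2 t"
    unfolding trace_def B_def by (simp add: sum_2)
  have "\<bar>B 1 1 t\<bar> > 1" using tr trB eq by simp
  then have "1 * 1 < \<bar>B 1 1 t\<bar> * \<bar>B 1 1 t\<bar>"
    by (intro mult_strict_mono) auto
  then have "B 1 1 t * B 1 1 t > 1" unfolding abs_mult_self_eq by simp
  then have "B 2 1 t * B 1 2 t \<noteq> 0" using det eq by auto
  then show ?thesis unfolding B_def by auto
qed

end
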